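(* Let $R$ be a ring with identity, ${}_RM$ a left $R$-module, $\varphi\in\mathrm{Hom}_R(M,M)$, and $r\ge1$ an integer such that $\ker(\varphi^r)\oplus\mathrm{im}(\varphi^r)=M$. Let $\varphi_1=\varphi\restriction\ker(\varphi^r)$ and $\varphi_2=\varphi\restriction\mathrm{im}(\varphi^r)$. Then there is an isomorphism of $Z(R)$-algebras $C_\varphi\cong C_{\varphi_1}\times C_{\varphi_2}$, where $C_\varphi\subseteq\mathrm{Hom}_R(M,M)$, $C_{\varphi_1}\subseteq\mathrm{Hom}_R(\ker(\varphi^r),\ker(\varphi^r))$ and $C_{\varphi_2}\subseteq\mathrm{Hom}_R(\mathrm{im}(\varphi^r),\mathrm{im}(\varphi^r))$ are the respective centralizers.
   Context: For an endomorphism $\alpha$ of a module $N$, $C_\alpha=\{\psi\in\mathrm{Hom}_R(N,N)\mid\psi\circ\alpha=\alpha\circ\psi\}$. $Z(R)$ is the centre of $R$. Note $\varphi$ maps $\ker(\varphi^r)$ and $\mathrm{im}(\varphi^r)$ into themselves. *)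

theory Defs
  imports Main
begin

definition left_module :: "('r::ring_1 \<Rightarrow> 'm::ab_group_add \<Rightarrow> 'm) \<Rightarrow> bool" where
  "left_module sm \<longleftrightarrow>
     (\<forall>a x y. sm a (x + y) = sm a x + sm a y) \<and>
     (\<forall>a b x. sm (a + b) x = sm a x + sm b x) \<and>
     (\<forall>a b x. sm (a * b) x = sm a (sm b x)) \<and>
     (\<forall>x. sm 1 x = x)"

definition submodule :: "('r::ring_1 \<Rightarrow> 'm::ab_group_add \<Rightarrow> 'm) \<Rightarrow> 'm set \<Rightarrow> bool" where
  "submodule sm N \<longleftrightarrow> 0 \<in> N \<and> (\<forall>x\<in>N. \<forall>y\<in>N. x + y \<in> N) \<and> (\<forall>a. \<forall>x\<in>N. sm a x \<in> N)"

text \<open>Hom_R(N,N) for a submodule N: R-linear maps N \<rightarrow> N, represented extensionally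
  (value 0 outside N) so that each endomorphism has a unique representative.\<close>

definition End_R :: "('r::ring_1 \<Rightarrow> 'm::ab_group_add \<Rightarrow> 'm) \<Rightarrow> 'm set \<Rightarrow> ('m \<Rightarrow> 'm) set" where
  "End_R sm N = {f. (\<forall>x\<in>N. f x \<in> N) \<and>
                    (\<forall>x\<in>N. \<forall>y\<in>N. f (x + y) = f x + f y) \<and>
                    (\<forall>a. \<forall>x\<in>N. f (sm a x) = sm a (f x)) \<and>
                    (\<forall>x. x \<notin> N \<longrightarrow> f x = 0)}"

definition centralizer :: "('r::ring_1 \<Rightarrow> 'm::ab_group_add \<Rightarrow> 'm) \<Rightarrow> 'm set \<Rightarrow> ('m \<Rightarrow> 'm) \<Rightarrow> ('m \<Rightarrow> 'm) set" where
  "centralizer sm N \<alpha> = {\<psi> \<in> End_R sm N. \<forall>x\<in>N. \<psi> (\<alpha> x) = \<alpha> (\<psi> x)}"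

definition restr :: "'m set \<Rightarrow> ('m \<Rightarrow> 'm::zero) \<Rightarrow> ('m \<Rightarrow> 'm)" where
  "restr N f = (\<lambda>x. if x \<in> N then f x else 0)"

definition e_add :: "'m set \<Rightarrow> ('m \<Rightarrow> 'm::ab_group_add) \<Rightarrow> ('m \<Rightarrow> 'm) \<Rightarrow> ('m \<Rightarrow> 'm)" where
  "e_add N f g = (\<lambda>x. if x \<in> N then f x + g x else 0)"

definition e_mult :: "'m set \<Rightarrow> ('m \<Rightarrow> 'm::ab_group_add) \<Rightarrow> ('m \<Rightarrow> 'm) \<Rightarrow> ('m \<Rightarrow> 'm)" where
  "e_mult N f g = (\<lambda>x. if x \<in> N then f (g x) else 0)"

definition e_one :: "'m set \<Rightarrow> ('m \<Rightarrow> 'm::ab_group_add)" where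
  "e_one N = (\<lambda>x. if x \<in> N then x else 0)"

definition e_smult :: "('r::ring_1 \<Rightarrow> 'm::ab_group_add \<Rightarrow> 'm) \<Rightarrow> 'm set \<Rightarrow> 'r \<Rightarrow> ('m \<Rightarrow> 'm) \<Rightarrow> ('m \<Rightarrow> 'm)" where
  "e_smult sm N z f = (\<lambda>x. if x \<in> N then sm z (f x) else 0)"

definition ring_center :: "'r::ring_1 set" where
  "ring_center = {z. \<forall>a. z * a = a * z}"

definition Zalg_iso_prod ::
  "('r::ring_1 \<Rightarrow> 'm::ab_group_add \<Rightarrow> 'm) \<Rightarrow> 'm set \<Rightarrow> ('m \<Rightarrow> 'm) set \<Rightarrow>
   'm set \<Rightarrow> ('m \<Rightarrow> 'm) set \<Rightarrow> 'm set \<Rightarrow> ('m \<Rightarrow> 'm) set \<Rightarrow> bool" where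
  "Zalg_iso_prod sm N C N1 C1 N2 C2 \<longleftrightarrow>
    (\<exists>\<Phi>. bij_betw \<Phi> C (C1 \<times> C2) \<and>
      (\<forall>f\<in>C. \<forall>g\<in>C. \<Phi> (e_add N f g) =
           (e_add N1 (fst (\<Phi> f)) (fst (\<Phi> g)), e_add N2 (snd (\<Phi> f)) (snd (\<Phi> g)))) \<and>
      (\<forall>f\<in>C. \<forall>g\<in>C. \<Phi> (e_mult N f g) =
           (e_mult N1 (fst (\<Phi> f)) (fst (\<Phi> g)), e_mult N2 (snd (\<Phi> f)) (snd (\<Phi> g)))) \<and>
      \<Phi> (e_one N) = (e_one N1, e_one N2) \<and>
      (\<forall>z\<in>ring_center. \<forall>f\<in>C. \<Phi> (e_smult sm N z f) =
           (e_smult sm N1 z (fst (\<Phi> f)), e_smult sm N2 z (snd (\<Phi> f)))))"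

end

theory Submission
  imports Defs
begin

lemma end_add: "f \<in> End_R sm UNIV \<Longrightarrow> f (x+y) = f x + f y" by (simp add: End_R_def)
lemma end_sm: "f \<in> End_R sm UNIV \<Longrightarrow> f (sm a x) = sm a (f x)" by (simp add: End_R_def)
lemma end_zero: "f \<in> End_R sm UNIV \<Longrightarrow> f 0 = 0" using end_add[of f sm 0 0] by simp
lemma end_diff: "f \<in> End_R sm UNIV \<Longrightarrow> f (x - y) = f x - f y"
  using end_add[of f sm "x-y" y] by (simp add: algebra_simps)
lemma end_pow: "f \<in> End_R sm UNIV \<Longrightarrow> f^^n \<in> End_R sm UNIV"
  by (induct n) (auto simp: End_R_def)
lemma sm_add: "left_module sm \<Longrightarrow> sm a (x + y) = sm a x + sm a y" by (simp add: left_module_def)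
lemma sm_zero: "left_module sm \<Longrightarrow> sm a 0 = 0" using sm_add[of sm a 0 0] by simp
lemma sm_diff: "left_module sm \<Longrightarrow> sm a (x - y) = sm a x - sm a y"
  using sm_add[of sm a "x-y" y] by (simp add: algebra_simps)

lemma EndN_add: "f \<in> End_R sm N \<Longrightarrow> x \<in> N \<Longrightarrow> y \<in> N \<Longrightarrow> f (x+y) = f x + f y"
  by (simp add: End_R_def)
lemma EndN_sm: "f \<in> End_R sm N \<Longrightarrow> x \<in> N \<Longrightarrow> f (sm c x) = sm c (f x)"
  by (simp add: End_R_def)
lemma EndN_in: "f \<in> End_R sm N \<Longrightarrow> x \<in> N \<Longrightarrow> f x \<in> N"
  by (simp add: End_R_def)
lemma EndN_out: "f \<in> End_R sm N \<Longrightarrow> x \<notin> N \<Longrightarrow> f x = 0"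
  by (simp add: End_R_def)

lemma comm_pow:
  assumes "\<forall>x. f (\<phi> x) = \<phi> (f x)" shows "f ((\<phi>^^n) x) = (\<phi>^^n) (f x)"
  using assms by (induct n) auto

locale decomp =
  fixes sm :: "'r::ring_1 \<Rightarrow> 'm::ab_group_add \<Rightarrow> 'm" and \<phi> :: "'m \<Rightarrow> 'm" and r :: nat
  assumes lm: "left_module sm" and hom: "\<phi> \<in> End_R sm UNIV"
   and disj: "{x. (\<phi> ^^ r) x = 0} \<inter> range (\<phi> ^^ r) = {0}"
   and dec: "\<forall>x. \<exists>a b. (\<phi> ^^ r) a = 0 \<and> b \<in> range (\<phi> ^^ r) \<and> x = a + b"
begin

abbreviation "p \<equiv> \<phi> ^^ r"
abbreviation "K \<equiv> {x. p x = 0}"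
abbreviation "I \<equiv> range p"

lemma p_hom: "p \<in> End_R sm UNIV" using end_pow hom .
lemma p_add: "p (x + y) = p x + p y" using p_hom by (simp add: End_R_def)
lemma p_sm: "p (sm c x) = sm c (p x)" using p_hom by (simp add: End_R_def)
lemma p_zero: "p 0 = 0" using p_add[of 0 0] by simp
lemma p_diff: "p (x - y) = p x - p y" using p_add[of "x-y" y] by (simp add: algebra_simps)

lemma K_diff: "a \<in> K \<Longrightarrow> b \<in> K \<Longrightarrow> a - b \<in> K" using p_diff by simp
lemma K_add: "a \<in> K \<Longrightarrow> b \<in> K \<Longrightarrow> a + b \<in> K" using p_add by simp
lemma K_sm: "a \<in> K \<Longrightarrow> sm c a \<in> K" using p_sm sm_zero[OF lm] by simp
lemma K_phi: "a \<in> K \<Longrightarrow> \<phi> a \<in> K"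
  using funpow_swap1[of \<phi> r a] end_zero[OF hom] by simp
lemma I_diff: assumes "a \<in> I" "b \<in> I" shows "a - b \<in> I"
proof -
  obtain u v where "a = p u" "b = p v" using assms by auto
  hence "a - b = p (u - v)" by (simp add: p_diff)
  thus ?thesis by simp
qed
lemma I_add: assumes "a \<in> I" "b \<in> I" shows "a + b \<in> I"
proof -
  obtain u v where "a = p u" "b = p v" using assms by auto
  hence "a + b = p (u + v)" by (simp add: p_add)
  thus ?thesis by simp
qed
lemma I_sm: assumes "a \<in> I" shows "sm c a \<in> I"
proof -
  obtain u where "a = p u" using assms by auto
  hence "sm c a = p (sm c u)" by (simp add: p_sm)
  thus ?thesis by simp
qed
lemma I_phi: assumes "a \<in> I" shows "\<phi> a \<in> I"
proof -
  obtain u where "a = p u" using assms by auto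
  hence "\<phi> a = p (\<phi> u)" by (simp add: funpow_swap1)
  thus ?thesis by simp
qed
lemma I_zero: "0 \<in> I" using p_zero[symmetric] by (rule range_eqI)

lemma uniq: assumes "a \<in> K" "a' \<in> K" "x - a \<in> I" "x - a' \<in> I" shows "a = a'"
proof -
  have "a - a' \<in> K" using K_diff assms by blast
  moreover have "a - a' = (x - a') - (x - a)" by simp
  hence "a - a' \<in> I" using I_diff assms by metis
  ultimately have "a - a' = 0" using disj by blast
  thus ?thesis by simp
qed

definition pK where "pK x = (SOME a. a \<in> K \<and> x - a \<in> I)"

lemma pK: "pK x \<in> K \<and> x - pK x \<in> I"
proof -
  obtain a b where "p a = 0" "b \<in> I" "x = a + b" using dec by blast
  hence "a \<in> K \<and> x - a \<in> I" by simp
  thus ?thesis unfolding pK_def by (rule someI)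
qed

lemma pK_eq: "a \<in> K \<Longrightarrow> x - a \<in> I \<Longrightarrow> pK x = a" using uniq pK by blast

lemma pK_add: "pK (x+y) = pK x + pK y"
proof (rule pK_eq)
  show "pK x + pK y \<in> K" using K_add pK by blast
  have "x + y - (pK x + pK y) = (x - pK x) + (y - pK y)" by simp
  thus "x + y - (pK x + pK y) \<in> I" using I_add pK by metis
qed

lemma pK_sm: "pK (sm c x) = sm c (pK x)"
proof (rule pK_eq)
  show "sm c (pK x) \<in> K" using K_sm pK by blast
  have "sm c x - sm c (pK x) = sm c (x - pK x)" using sm_diff[OF lm] by simp
  thus "sm c x - sm c (pK x) \<in> I" using I_sm pK by metis
qed

lemma pK_phi: "pK (\<phi> x) = \<phi> (pK x)"
proof (rule pK_eq)
  show "\<phi> (pK x) \<in> K" using K_phi pK by blast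
  have "\<phi> x - \<phi> (pK x) = \<phi> (x - pK x)" using end_diff[OF hom] by simp
  thus "\<phi> x - \<phi> (pK x) \<in> I" using I_phi pK by metis
qed

lemma pK_K: "x \<in> K \<Longrightarrow> pK x = x" using pK_eq I_zero by simp
lemma pK_I: "x \<in> I \<Longrightarrow> pK x = 0" using pK_eq[of 0 x] p_zero by simp

lemma C_K: "f \<in> centralizer sm UNIV \<phi> \<Longrightarrow> x \<in> K \<Longrightarrow> f x \<in> K"
  using comm_pow[of f \<phi> r x] end_zero[of f sm] by (auto simp: centralizer_def)
lemma C_I: "f \<in> centralizer sm UNIV \<phi> \<Longrightarrow> x \<in> I \<Longrightarrow> f x \<in> I"
  using comm_pow[of f \<phi> r] by (auto simp: centralizer_def)

lemma main: "Zalg_iso_prod sm UNIV (centralizer sm UNIV \<phi>) K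
           (centralizer sm K (restr K \<phi>)) I (centralizer sm I (restr I \<phi>))"
proof -
  let ?C = "centralizer sm UNIV \<phi>"
  let ?C1 = "centralizer sm K (restr K \<phi>)"
  let ?C2 = "centralizer sm I (restr I \<phi>)"
  define \<Phi> where "\<Phi> f = (restr K f, restr I f)" for f :: "'m \<Rightarrow> 'm"
  have into: "\<Phi> f \<in> ?C1 \<times> ?C2" if f: "f \<in> ?C" for f
  proof -
    have fe: "f \<in> End_R sm UNIV" and fc: "\<forall>x. f (\<phi> x) = \<phi> (f x)"
      using f by (auto simp: centralizer_def)
    have "restr K f \<in> ?C1"
      using C_K[OF f] K_phi K_add K_sm fe fc
      by (auto simp: centralizer_def End_R_def restr_def)
    moreover have "restr I f \<in> ?C2"
      using C_I[OF f] I_phi I_add I_sm fe fc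
      by (auto simp: centralizer_def End_R_def restr_def)
    ultimately show ?thesis by (simp add: \<Phi>_def)
  qed
  have split: "f x = f (pK x) + f (x - pK x)" if "f \<in> ?C" for f x
    using that end_add[of f sm "pK x" "x - pK x"] by (auto simp: centralizer_def)
  have inj: "inj_on \<Phi> ?C"
  proof (rule inj_onI)
    fix f g assume f: "f \<in> ?C" and g: "g \<in> ?C" and e: "\<Phi> f = \<Phi> g"
    show "f = g"
    proof
      fix x
      have e1: "restr K f = restr K g" "restr I f = restr I g" using e by (simp_all add: \<Phi>_def)
      have "restr K f (pK x) = restr K g (pK x)" using e1(1) by simp
      hence "f (pK x) = g (pK x)" using pK[of x] unfolding restr_def by simp
      moreover have "restr I f (x - pK x) = restr I g (x - pK x)" using e1(2) by simp
      hence "f (x - pK x) = g (x - pK x)" using pK[of x] unfolding restr_def by simp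
      ultimately show "f x = g x" using split[OF f] split[OF g] by metis
    qed
  qed
  have surj: "?C1 \<times> ?C2 \<subseteq> \<Phi> ` ?C"
  proof
    fix gh assume gh: "gh \<in> ?C1 \<times> ?C2"
    obtain g h where ghd: "gh = (g, h)" and g: "g \<in> ?C1" and h: "h \<in> ?C2" using gh by auto
    have gE: "g \<in> End_R sm K" and gc: "\<forall>x\<in>K. g (restr K \<phi> x) = restr K \<phi> (g x)"
      using g by (auto simp: centralizer_def)
    have hE: "h \<in> End_R sm I" and hc: "\<forall>x\<in>I. h (restr I \<phi> x) = restr I \<phi> (h x)"
      using h by (auto simp: centralizer_def)
    have gK: "\<And>x. x \<in> K \<Longrightarrow> g x \<in> K" and hI: "\<And>x. x \<in> I \<Longrightarrow> h x \<in> I"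
      using EndN_in[OF gE] EndN_in[OF hE] by auto
    have gphi: "\<And>x. x \<in> K \<Longrightarrow> g (\<phi> x) = \<phi> (g x)"
    proof -
      fix x assume x: "x \<in> K"
      have "g (restr K \<phi> x) = restr K \<phi> (g x)" using gc x by blast
      moreover have "restr K \<phi> x = \<phi> x" using x unfolding restr_def by (simp only: if_True)
      moreover have "restr K \<phi> (g x) = \<phi> (g x)" using gK[OF x] unfolding restr_def by (simp only: if_True)
      ultimately show "g (\<phi> x) = \<phi> (g x)" by simp
    qed
    have hphi: "\<And>x. x \<in> I \<Longrightarrow> h (\<phi> x) = \<phi> (h x)"
    proof -
      fix x assume x: "x \<in> I"
      have "h (restr I \<phi> x) = restr I \<phi> (h x)" using hc x by blast
      moreover have "restr I \<phi> x = \<phi> x" using x unfolding restr_def by (simp only: if_True)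
      moreover have "restr I \<phi> (h x) = \<phi> (h x)" using hI[OF x] unfolding restr_def by (simp only: if_True)
      ultimately show "h (\<phi> x) = \<phi> (h x)" by simp
    qed
    have h0: "h 0 = 0" using EndN_add[OF hE I_zero I_zero] by simp
    have g0: "g 0 = 0" using EndN_add[OF gE, of 0 0] p_zero by simp
    define F where "F x = g (pK x) + h (x - pK x)" for x
    have Fadd: "F (x + y) = F x + F y" for x y
    proof -
      have e: "x + y - pK (x+y) = (x - pK x) + (y - pK y)" by (simp add: pK_add)
      have "F (x + y) = g (pK x + pK y) + h ((x - pK x) + (y - pK y))"
        unfolding F_def pK_add by (simp add: algebra_simps)
      also have "\<dots> = (g (pK x) + g (pK y)) + (h (x - pK x) + h (y - pK y))"
        using EndN_add[OF gE] EndN_add[OF hE] pK[of x] pK[of y] by simp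
      also have "\<dots> = F x + F y" unfolding F_def by (simp add: algebra_simps)
      finally show ?thesis .
    qed
    have Fsm: "F (sm c x) = sm c (F x)" for c x
    proof -
      have e: "sm c x - pK (sm c x) = sm c (x - pK x)" by (simp add: pK_sm sm_diff[OF lm])
      have "F (sm c x) = g (sm c (pK x)) + h (sm c (x - pK x))"
        unfolding F_def pK_sm by (simp add: sm_diff[OF lm])
      also have "\<dots> = sm c (g (pK x)) + sm c (h (x - pK x))"
        using EndN_sm[OF gE] EndN_sm[OF hE] pK[of x] by simp
      also have "\<dots> = sm c (F x)" unfolding F_def by (simp add: sm_add[OF lm])
      finally show ?thesis .
    qed
    have Fphi: "F (\<phi> x) = \<phi> (F x)" for x
    proof -
      have e: "\<phi> x - pK (\<phi> x) = \<phi> (x - pK x)" by (simp add: pK_phi end_diff[OF hom])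
      have "F (\<phi> x) = g (\<phi> (pK x)) + h (\<phi> (x - pK x))"
        unfolding F_def pK_phi by (simp add: end_diff[OF hom])
      also have "\<dots> = \<phi> (g (pK x)) + \<phi> (h (x - pK x))"
        using gphi hphi pK[of x] by simp
      also have "\<dots> = \<phi> (F x)" unfolding F_def by (simp add: end_add[OF hom])
      finally show ?thesis .
    qed
    have FC: "F \<in> ?C" using Fadd Fsm Fphi by (simp add: centralizer_def End_R_def)
    have "restr K F = g"
    proof
      fix x show "restr K F x = g x"
        using EndN_out[OF gE] h0 pK_K by (auto simp: restr_def F_def)
    qed
    moreover have "restr I F = h"
    proof
      fix x show "restr I F x = h x"
        using EndN_out[OF hE] g0 pK_I by (auto simp: restr_def F_def)
    qed
    ultimately have "\<Phi> F = gh" by (simp add: \<Phi>_def ghd)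
    thus "gh \<in> \<Phi> ` ?C" using FC by blast
  qed
  have bij: "bij_betw \<Phi> ?C (?C1 \<times> ?C2)"
    unfolding bij_betw_def using inj surj into by blast
  have add: "\<Phi> (e_add UNIV f g) =
           (e_add K (fst (\<Phi> f)) (fst (\<Phi> g)), e_add I (snd (\<Phi> f)) (snd (\<Phi> g)))" for f g
    by (auto simp: \<Phi>_def e_add_def restr_def fun_eq_iff)
  have mult: "\<Phi> (e_mult UNIV f g) =
           (e_mult K (fst (\<Phi> f)) (fst (\<Phi> g)), e_mult I (snd (\<Phi> f)) (snd (\<Phi> g)))"
    if "g \<in> ?C" for f g
    using C_K[OF that] C_I[OF that]
    by (auto simp: \<Phi>_def e_mult_def restr_def fun_eq_iff)
  have one: "\<Phi> (e_one UNIV) = (e_one K, e_one I)"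
    by (auto simp: \<Phi>_def e_one_def restr_def fun_eq_iff)
  have smul: "\<Phi> (e_smult sm UNIV z f) =
           (e_smult sm K z (fst (\<Phi> f)), e_smult sm I z (snd (\<Phi> f)))" for z f
    by (auto simp: \<Phi>_def e_smult_def restr_def fun_eq_iff)
  show ?thesis unfolding Zalg_iso_prod_def
    apply (rule exI[where x=\<Phi>])
    using bij add mult one smul by simp
qed

end

theorem lemma5p1:
  fixes sm :: "'r::ring_1 \<Rightarrow> 'm::ab_group_add \<Rightarrow> 'm"
    and \<phi> :: "'m \<Rightarrow> 'm" and r :: nat
  assumes "left_module sm"
    and "\<phi> \<in> End_R sm UNIV"
    and "r \<ge> 1"
    and "{x. (\<phi> ^^ r) x = 0} \<inter> range (\<phi> ^^ r) = {0}"
    and "\<forall>x. \<exists>a b. (\<phi> ^^ r) a = 0 \<and> b \<in> range (\<phi> ^^ r) \<and> x = a + b"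
  shows "Zalg_iso_prod sm UNIV (centralizer sm UNIV \<phi>)
           {x. (\<phi> ^^ r) x = 0}
           (centralizer sm {x. (\<phi> ^^ r) x = 0} (restr {x. (\<phi> ^^ r) x = 0} \<phi>))
           (range (\<phi> ^^ r))
           (centralizer sm (range (\<phi> ^^ r)) (restr (range (\<phi> ^^ r)) \<phi>))"
proof -
  interpret decomp sm \<phi> r using assms by (unfold_locales) auto
  show ?thesis by (rule main)
qed

end
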